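(* If $f(z,w)$ is a rational function which is bounded and analytic on the bidisk $\mathbb{D}^2=\{(z,w)\in\mathbb{C}^2:|z|,|w|<1\}$, then the partial derivatives $\partial f/\partial z$ and $\partial f/\partial w$ belong to the Hardy space $H^1(\mathbb{D}^2)$.
   Context: For $\mathfrak{p}\in(0,\infty]$, $H^{\mathfrak{p}}(\mathbb{D}^2)$ is the space of analytic $f:\mathbb{D}^2\to\mathbb{C}$ with $\sup_{0<r<1}\|f_r\|_{L^{\mathfrak{p}}(\mathbb{T}^2)}<\infty$, where $f_r(z,w)=f(rz,rw)$ and $\mathbb{T}^2=\{|z|=|w|=1\}$ carries normalized Lebesgue measure. *)

theory Defs
  imports "HOL-Analysis.Analysis"
begin

definition bidisk_pt :: "complex \<Rightarrow> complex \<Rightarrow> bool" where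
  "bidisk_pt z w \<longleftrightarrow> norm z < 1 \<and> norm w < 1"

text \<open>Analytic on the bidisk: continuous and holomorphic in each variable separately
  (equivalent to joint holomorphy by Osgood's lemma).\<close>
definition analytic_bidisk :: "(complex \<Rightarrow> complex \<Rightarrow> complex) \<Rightarrow> bool" where
  "analytic_bidisk f \<longleftrightarrow>
     continuous_on {p :: complex \<times> complex. bidisk_pt (fst p) (snd p)} (\<lambda>p. f (fst p) (snd p)) \<and>
     (\<forall>z w. bidisk_pt z w \<longrightarrow>
        (\<lambda>u. f u w) field_differentiable (at z) \<and> (\<lambda>v. f z v) field_differentiable (at w))"

definition poly2 :: "(nat \<Rightarrow> nat \<Rightarrow> complex) \<Rightarrow> nat \<Rightarrow> complex \<Rightarrow> complex \<Rightarrow> complex" where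
  "poly2 c n z w = (\<Sum>i\<le>n. \<Sum>j\<le>n. c i j * z ^ i * w ^ j)"

definition rational_on_bidisk :: "(complex \<Rightarrow> complex \<Rightarrow> complex) \<Rightarrow> bool" where
  "rational_on_bidisk f \<longleftrightarrow>
     (\<exists>cp cq n. (\<exists>i\<le>n. \<exists>j\<le>n. cq i j \<noteq> 0) \<and>
        (\<forall>z w. bidisk_pt z w \<and> poly2 cq n z w \<noteq> 0 \<longrightarrow>
            f z w = poly2 cp n z w / poly2 cq n z w))"

definition bounded_bidisk :: "(complex \<Rightarrow> complex \<Rightarrow> complex) \<Rightarrow> bool" where
  "bounded_bidisk f \<longleftrightarrow> (\<exists>B. \<forall>z w. bidisk_pt z w \<longrightarrow> norm (f z w) \<le> B)"

definition torus_Lp_r :: "real \<Rightarrow> (complex \<Rightarrow> complex \<Rightarrow> complex) \<Rightarrow> real \<Rightarrow> ennreal" where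
  "torus_Lp_r p f r =
     ennreal (1 / (4 * pi\<^sup>2)) *
     (\<integral>\<^sup>+ x. ennreal (norm (f (r * cis (fst x)) (r * cis (snd x))) powr p)
            * indicator ({0..2*pi} \<times> {0..2*pi}) x \<partial>(lborel \<Otimes>\<^sub>M lborel))"

definition hardy_bidisk :: "real \<Rightarrow> (complex \<Rightarrow> complex \<Rightarrow> complex) \<Rightarrow> bool" where
  "hardy_bidisk p f \<longleftrightarrow> analytic_bidisk f \<and> (SUP r\<in>{0<..<1}. torus_Lp_r p f r) < \<infinity>"

end

theory Submission
  imports Defs "HOL-Complex_Analysis.Complex_Analysis" "HOL-Computational_Algebra.Polynomial"
begin


lemma sign_const:
  fixes u' :: "real \<Rightarrow> real"
  assumes cont: "continuous_on UNIV u'" and nz: "\<forall>x\<in>{a<..<b}. u' x \<noteq> 0"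
  shows "(\<forall>x\<in>{a<..<b}. u' x > 0) \<or> (\<forall>x\<in>{a<..<b}. u' x < 0)"
proof (rule ccontr)
  assume "\<not> ?thesis"
  then obtain x y where x: "x \<in> {a<..<b}" "u' x \<le> 0" and y: "y \<in> {a<..<b}" "u' y \<ge> 0"
    by (meson not_less)
  have cmn: "continuous_on {min x y..max x y} u'" using cont continuous_on_subset by blast
  have "\<exists>z. min x y \<le> z \<and> z \<le> max x y \<and> u' z = 0"
  proof (cases "x \<le> y")
    case True
    then show ?thesis using IVT'[of u' x 0 y] x y cmn by auto
  next
    case False
    then show ?thesis using IVT2'[of u' x 0 y] x y cmn by auto
  qed
  then obtain z where "min x y \<le> z" "z \<le> max x y" "u' z = 0" by blast
  moreover have "z \<in> {a<..<b}" using calculation x y by auto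
  ultimately show False using nz by auto
qed

lemma var_piece:
  fixes u u' :: "real \<Rightarrow> real"
  assumes der: "\<And>x. (u has_real_derivative u' x) (at x)" and cont: "continuous_on UNIV u'"
    and bd: "\<And>x. \<bar>u x\<bar> \<le> M" and ab: "a \<le> b" and nz: "\<forall>x\<in>{a<..<b}. u' x \<noteq> 0"
  shows "integral {a..b} (\<lambda>x. \<bar>u' x\<bar>) \<le> 2 * M"
proof -
  have ftc: "(u' has_integral (u b - u a)) {a..b}"
    by (rule fundamental_theorem_of_calculus[OF ab])
       (auto intro!: has_field_derivative_at_within der simp: has_real_derivative_iff_has_vector_derivative[symmetric])
  have opn: "\<And>x. x\<in>{a..b}-{a,b} \<Longrightarrow> x\<in>{a<..<b}" by auto
  have "u b - u a \<le> 2 * M" "u a - u b \<le> 2 * M" using bd[of a] bd[of b] by auto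
  from sign_const[OF cont nz] show ?thesis
  proof
    assume pos: "\<forall>x\<in>{a<..<b}. u' x > 0"
    have "((\<lambda>x. \<bar>u' x\<bar>) has_integral (u b - u a)) {a..b}"
    proof (rule has_integral_spike_finite[OF _ _ ftc, of "{a,b}"])
      fix x assume "x \<in> {a..b} - {a,b}"
      then have "x \<in> {a<..<b}" by (rule opn)
      then have "0 < u' x" using pos by blast
      then show "\<bar>u' x\<bar> = u' x" by simp
    qed auto
    then show ?thesis using \<open>u b - u a \<le> 2 * M\<close> by (simp add: integral_unique)
  next
    assume neg: "\<forall>x\<in>{a<..<b}. u' x < 0"
    have "((\<lambda>x. \<bar>u' x\<bar>) has_integral (- (u b - u a))) {a..b}"
    proof (rule has_integral_spike_finite[OF _ _ has_integral_neg[OF ftc], of "{a,b}"])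
      fix x assume "x \<in> {a..b} - {a,b}"
      then have "x \<in> {a<..<b}" by (rule opn)
      then have "u' x < 0" using neg by blast
      then show "\<bar>u' x\<bar> = - u' x" by simp
    qed auto
    then show ?thesis using \<open>u a - u b \<le> 2 * M\<close> by (simp add: integral_unique)
  qed
qed

lemma var_bound:
  fixes u u' :: "real \<Rightarrow> real"
  assumes der: "\<And>x. (u has_real_derivative u' x) (at x)" and cont: "continuous_on UNIV u'"
    and bd: "\<And>x. \<bar>u x\<bar> \<le> M"
  shows "a \<le> b \<Longrightarrow> finite {x\<in>{a<..<b}. u' x = 0} \<Longrightarrow> card {x\<in>{a<..<b}. u' x = 0} \<le> N
     \<Longrightarrow> integral {a..b} (\<lambda>x. \<bar>u' x\<bar>) \<le> 2 * M * (N + 1)"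
proof (induction N arbitrary: a b rule: less_induct)
  case (less N)
  have M0: "0 \<le> M" using bd[of 0] by auto
  let ?Z = "{x\<in>{a<..<b}. u' x = 0}"
  show ?case
  proof (cases "?Z = {}")
    case True
    then have "integral {a..b} (\<lambda>x. \<bar>u' x\<bar>) \<le> 2 * M"
      by (intro var_piece[OF der cont bd less.prems(1)]) auto
    also have "\<dots> \<le> 2 * M * (N + 1)" using M0 by (simp add: algebra_simps)
    finally show ?thesis .
  next
    case False
    then obtain c where c: "c \<in> ?Z" by blast
    let ?Z1 = "{x\<in>{a<..<c}. u' x = 0}" and ?Z2 = "{x\<in>{c<..<b}. u' x = 0}"
    have sub: "?Z1 \<union> ?Z2 \<subseteq> ?Z - {c}" using c by auto
    have disj: "?Z1 \<inter> ?Z2 = {}" by auto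
    have fin1: "finite ?Z1" "finite ?Z2" using sub less.prems(2) by (auto intro: finite_subset)
    have "card ?Z1 + card ?Z2 = card (?Z1 \<union> ?Z2)" using fin1 disj by (simp add: card_Un_disjoint)
    also have "\<dots> \<le> card (?Z - {c})" using sub less.prems(2) by (intro card_mono) auto
    also have "\<dots> = card ?Z - 1" using c less.prems(2) by simp
    finally have cs: "card ?Z1 + card ?Z2 \<le> card ?Z - 1" .
    have cZ: "card ?Z \<ge> 1" using c less.prems(2) card_0_eq[of ?Z] by fastforce
    have l1: "card ?Z1 < N" "card ?Z2 < N" using cs cZ less.prems(3) by linarith+
    have ac: "a \<le> c" "c \<le> b" using c by auto
    have I1: "integral {a..c} (\<lambda>x. \<bar>u' x\<bar>) \<le> 2 * M * (card ?Z1 + 1)"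
      using less.IH[OF l1(1) ac(1) fin1(1)] by simp
    have I2: "integral {c..b} (\<lambda>x. \<bar>u' x\<bar>) \<le> 2 * M * (card ?Z2 + 1)"
      using less.IH[OF l1(2) ac(2) fin1(2)] by simp
    have intg: "(\<lambda>x. \<bar>u' x\<bar>) integrable_on {a..b}"
      by (intro integrable_continuous_interval continuous_intros continuous_on_subset[OF cont]) auto
    have "integral {a..b} (\<lambda>x. \<bar>u' x\<bar>) = integral {a..c} (\<lambda>x. \<bar>u' x\<bar>) + integral {c..b} (\<lambda>x. \<bar>u' x\<bar>)"
      using Henstock_Kurzweil_Integration.integral_combine[OF ac intg] by simp
    also have "\<dots> \<le> 2 * M * (card ?Z1 + 1) + 2 * M * (card ?Z2 + 1)" using I1 I2 by linarith
    also have "\<dots> = 2 * M * (real (card ?Z1 + card ?Z2) + 2)" by (simp add: algebra_simps)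
    also have "\<dots> \<le> 2 * M * (N + 1)"
    proof -
      have "real (card ?Z1 + card ?Z2) + 2 \<le> N + 1" using cs cZ less.prems(3) by linarith
      then show ?thesis using M0 by (intro mult_left_mono) auto
    qed
    finally show ?thesis .
  qed
qed



lemma unit_cnj: fixes x :: complex assumes "norm x = 1" shows "cnj x = inverse x"
proof -
  have "x * cnj x = 1" using complex_norm_square[of x] assms by simp
  then show ?thesis by (metis inverse_unique)
qed

lemma reflect_cnj:
  fixes x :: complex assumes "norm x = 1"
  shows "poly (reflect_poly (map_poly cnj p)) x = x ^ degree p * cnj (poly p x)"
proof -
  have x0: "x \<noteq> 0" using assms by auto
  have dg: "degree (map_poly cnj p) = degree p" by (rule degree_map_poly) auto
  have "cnj (inverse x) = x" using unit_cnj[OF assms] by (metis complex_cnj_cnj complex_cnj_inverse)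
  then show ?thesis using x0 by (simp add: poly_reflect_poly_nz dg)
qed

lemma key_alg:
  fixes x a q :: complex and r :: real
  assumes x: "norm x = 1" and q: "q \<noteq> 0" and r: "r \<noteq> 0"
  shows "Re (a / q^2 * (\<i> * r * x)) = 0 \<longleftrightarrow>
         x^(dA+2) * a * (x^dQ * cnj q)^2 - x^(2*dQ) * (x^dA * cnj a) * q^2 = 0"
proof -
  have x0: "x \<noteq> 0" using x by auto
  have cx: "cnj x = inverse x" by (rule unit_cnj[OF x])
  have cq: "cnj q \<noteq> 0" using q by simp
  let ?z = "a / q^2 * (\<i> * r * x)"
  have "?z + cnj ?z = (x^(dA+2) * a * (x^dQ * cnj q)^2 - x^(2*dQ) * (x^dA * cnj a) * q^2)
          * (\<i> * r / (q^2 * (x^dQ * cnj q)^2 * x^(dA+1)))"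
    using x0 cq q by (simp add: cx field_simps power_add power_mult_distrib power_mult)
  moreover have "?z + cnj ?z = complex_of_real (2 * Re ?z)" by (rule complex_add_cnj)
  moreover have "\<i> * r / (q^2 * (x^dQ * cnj q)^2 * x^(dA+1)) \<noteq> 0" using x0 cq q r by simp
  ultimately show ?thesis by (metis (no_types, lifting) mult_eq_0_iff of_real_eq_0_iff mult_zero_right zero_neq_numeral)
qed

lemma cis_inj: "inj_on cis {0<..<2*pi}"
proof (rule inj_onI)
  fix s t assume s: "s \<in> {0<..<2*pi}" and t: "t \<in> {0<..<2*pi}" and e: "cis s = cis t"
  have "cis (s - t) = 1" using e by (simp add: cis_divide[symmetric])
  then have "cos (s - t) = 1" by (metis cis.sel(1) one_complex.sel(1))
  then obtain k :: int where k: "s - t = real_of_int k * 2 * pi" using cos_one_2pi_int by blast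
  have "\<bar>s - t\<bar> < 2 * pi" using s t by auto
  then have "\<bar>real_of_int k\<bar> * (2 * pi) < 1 * (2 * pi)" using k by (simp add: abs_mult)
  then have "\<bar>real_of_int k\<bar> < 1" using pi_gt_zero by (meson mult_less_cancel_right_pos zero_less_mult_iff zero_less_numeral)
  then have "k = 0" by linarith
  then show "s = t" using k by simp
qed

lemma zeros_count:
  fixes g :: "complex \<Rightarrow> complex" and P Q :: "complex poly" and r :: real
  assumes hol: "g holomorphic_on ball 0 1"
    and eq: "\<And>z. norm z < 1 \<Longrightarrow> poly Q z \<noteq> 0 \<Longrightarrow> g z = poly P z / poly Q z"
    and Q0: "Q \<noteq> 0" and dP: "degree P \<le> n" and dQ: "degree Q \<le> n" and r0: "0 < r" and r1: "r < 1"
  shows "(finite {s\<in>{0<..<2*pi}. Re (deriv g (of_real r * cis s) * (\<i> * of_real r * cis s)) = 0} \<and>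
          card {s\<in>{0<..<2*pi}. Re (deriv g (of_real r * cis s) * (\<i> * of_real r * cis s)) = 0} \<le> 7*n+2)
      \<or> (\<exists>E. finite E \<and> (\<forall>s\<in>{0<..<2*pi}-E. Re (deriv g (of_real r * cis s) * (\<i> * of_real r * cis s)) = 0))"
proof -
  define u' where "u' = (\<lambda>s. Re (deriv g (of_real r * cis s) * (\<i> * of_real r * cis s)))"
  define A where "A = pderiv P * Q - P * pderiv Q"
  have derg: "deriv g z = poly A z / (poly Q z)^2" if z: "norm z < 1" "poly Q z \<noteq> 0" for z
  proof -
    define S where "S = {z. norm z < 1} \<inter> {z. poly Q z \<noteq> 0}"
    have oS: "open S" unfolding S_def
      by (intro open_Int open_Collect_neq open_Collect_less continuous_intros)
    have zS: "z \<in> S" using z by (simp add: S_def)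
    have d: "((\<lambda>z. poly P z / poly Q z) has_field_derivative
       (poly (pderiv P) z * poly Q z - poly P z * poly (pderiv Q) z) / (poly Q z * poly Q z)) (at z)"
      by (intro DERIV_divide poly_DERIV) (use z in simp)
    have "(g has_field_derivative
       (poly (pderiv P) z * poly Q z - poly P z * poly (pderiv Q) z) / (poly Q z * poly Q z)) (at z)"
      by (rule has_field_derivative_transform_within_open[OF d oS zS]) (auto simp: S_def eq)
    then show ?thesis by (simp add: DERIV_imp_deriv A_def power2_eq_square)
  qed
  define c where "c = complex_of_real r"
  have c0: "c \<noteq> 0" using r0 by (simp add: c_def)
  define Ar where "Ar = pcompose A [:0, c:]"
  define Qr where "Qr = pcompose Q [:0, c:]"
  have pAr: "poly Ar x = poly A (c * x)" for x by (simp add: Ar_def poly_pcompose mult.commute)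
  have pQr: "poly Qr x = poly Q (c * x)" for x by (simp add: Qr_def poly_pcompose mult.commute)
  define RA where "RA = reflect_poly (map_poly cnj Ar)"
  define RQ where "RQ = reflect_poly (map_poly cnj Qr)"
  define W where "W = monom 1 (degree Ar + 2) * Ar * RQ^2 - monom 1 (2 * degree Qr) * RA * Qr^2"
  have Qr0: "Qr \<noteq> 0" using pcompose_eq_0[of Q "[:0, c:]"] Q0 c0 by (auto simp: Qr_def)
  have key: "u' s = 0 \<longleftrightarrow> poly W (cis s) = 0" if q: "poly Qr (cis s) \<noteq> 0" for s
  proof -
    have nx: "norm (cis s) = 1" by simp
    have ncx: "norm (c * cis s) < 1" using r0 r1 by (simp add: c_def norm_mult)
    have "u' s = Re (poly Ar (cis s) / (poly Qr (cis s))^2 * (\<i> * r * cis s))"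
      unfolding u'_def using q ncx by (simp add: derg pAr pQr c_def)
    then have "u' s = 0 \<longleftrightarrow> (cis s)^(degree Ar+2) * poly Ar (cis s) * ((cis s)^(degree Qr) * cnj (poly Qr (cis s)))^2
        - (cis s)^(2*degree Qr) * ((cis s)^(degree Ar) * cnj (poly Ar (cis s))) * (poly Qr (cis s))^2 = 0"
      using key_alg[OF nx q, of r "poly Ar (cis s)" "degree Ar" "degree Qr"] r0 by simp
    also have "\<dots> \<longleftrightarrow> poly W (cis s) = 0"
      by (simp add: W_def RA_def RQ_def reflect_cnj[OF nx] poly_monom)
    finally show ?thesis .
  qed
  have dA: "degree A \<le> 2 * n"
  proof -
    have "degree (pderiv P * Q) \<le> 2 * n"
      using degree_mult_le[of "pderiv P" Q] degree_pderiv[of P] dP dQ by linarith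
    moreover have "degree (P * pderiv Q) \<le> 2 * n"
      using degree_mult_le[of P "pderiv Q"] degree_pderiv[of Q] dP dQ by linarith
    ultimately show ?thesis unfolding A_def using degree_diff_le_max[of "pderiv P * Q" "P * pderiv Q"] by linarith
  qed
  have dAr: "degree Ar \<le> 2 * n" using degree_pcompose_le[of A "[:0,c:]"] dA c0 by (simp add: Ar_def)
  have dQr: "degree Qr \<le> n" using degree_pcompose_le[of Q "[:0,c:]"] dQ c0 by (simp add: Qr_def)
  have dRA: "degree RA \<le> 2 * n" using degree_reflect_poly_le[of "map_poly cnj Ar"] dAr
    by (simp add: RA_def degree_map_poly)
  have dRQ: "degree RQ \<le> n" using degree_reflect_poly_le[of "map_poly cnj Qr"] dQr
    by (simp add: RQ_def degree_map_poly)
  have dW: "degree W \<le> 6 * n + 2"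
  proof -
    have "degree (monom (1::complex) (degree Ar + 2) * Ar * RQ^2) \<le> (degree Ar + 2) + degree Ar + degree RQ * 2"
      using degree_mult_le[of "monom (1::complex) (degree Ar + 2) * Ar" "RQ^2"]
        degree_mult_le[of "monom (1::complex) (degree Ar + 2)" Ar] degree_monom_le[of "1::complex" "degree Ar + 2"]
        degree_power_le[of RQ 2] by linarith
    moreover have "degree (monom (1::complex) (2 * degree Qr) * RA * Qr^2) \<le> (2 * degree Qr) + degree RA + degree Qr * 2"
      using degree_mult_le[of "monom (1::complex) (2 * degree Qr) * RA" "Qr^2"]
        degree_mult_le[of "monom (1::complex) (2 * degree Qr)" RA] degree_monom_le[of "1::complex" "2 * degree Qr"]
        degree_power_le[of Qr 2] by linarith
    ultimately show ?thesis unfolding W_def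
      using degree_diff_le_max[of "monom (1::complex) (degree Ar + 2) * Ar * RQ^2" "monom 1 (2 * degree Qr) * RA * Qr^2"]
        dAr dQr dRA dRQ by linarith
  qed
  define Z1 where "Z1 = {s\<in>{0<..<2*pi}. poly Qr (cis s) = 0}"
  have fin1: "finite Z1" and card1: "card Z1 \<le> n"
  proof -
    have sub: "cis ` Z1 \<subseteq> {x. poly Qr x = 0}" by (auto simp: Z1_def)
    have inj: "inj_on cis Z1" using cis_inj by (rule inj_on_subset) (auto simp: Z1_def)
    show "finite Z1" using inj_on_finite[OF inj sub poly_roots_finite[OF Qr0]] .
    have "card Z1 \<le> card {x. poly Qr x = 0}" using card_inj_on_le[OF inj sub poly_roots_finite[OF Qr0]] .
    also have "\<dots> \<le> degree Qr" by (rule card_poly_roots_bound[OF Qr0])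
    finally show "card Z1 \<le> n" using dQr by linarith
  qed
  show ?thesis
  proof (cases "W = 0")
    case True
    have "\<forall>s\<in>{0<..<2*pi}-Z1. u' s = 0" using key True by (auto simp: Z1_def)
    then show ?thesis using fin1 unfolding u'_def by blast
  next
    case False
    define Z2 where "Z2 = {s\<in>{0<..<2*pi}. poly W (cis s) = 0}"
    have fin2: "finite Z2" and card2: "card Z2 \<le> 6 * n + 2"
    proof -
      have sub: "cis ` Z2 \<subseteq> {x. poly W x = 0}" by (auto simp: Z2_def)
      have inj: "inj_on cis Z2" using cis_inj by (rule inj_on_subset) (auto simp: Z2_def)
      show "finite Z2" using inj_on_finite[OF inj sub poly_roots_finite[OF False]] .
      have "card Z2 \<le> card {x. poly W x = 0}" using card_inj_on_le[OF inj sub poly_roots_finite[OF False]] .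
      also have "\<dots> \<le> degree W" by (rule card_poly_roots_bound[OF False])
      finally show "card Z2 \<le> 6 * n + 2" using dW by linarith
    qed
    have sub: "{s\<in>{0<..<2*pi}. u' s = 0} \<subseteq> Z1 \<union> Z2" using key by (auto simp: Z1_def Z2_def)
    have fin: "finite {s\<in>{0<..<2*pi}. u' s = 0}" using sub fin1 fin2 by (meson finite_UnI finite_subset)
    have "card {s\<in>{0<..<2*pi}. u' s = 0} \<le> card (Z1 \<union> Z2)" using sub fin1 fin2 by (intro card_mono) auto
    also have "\<dots> \<le> card Z1 + card Z2" by (rule card_Un_le)
    finally have "card {s\<in>{0<..<2*pi}. u' s = 0} \<le> 7 * n + 2" using card1 card2 by linarith
    then show ?thesis using fin unfolding u'_def by blast
  qed
qed



lemma circle_deriv: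
  fixes h :: "complex \<Rightarrow> complex" and r :: real
  assumes hol: "h holomorphic_on ball 0 1" and r0: "0 < r" and r1: "r < 1"
  shows "((\<lambda>s. Re (h (of_real r * cis s))) has_real_derivative
            Re (deriv h (of_real r * cis s) * (\<i> * of_real r * cis s))) (at s)"
proof -
  define H where "H = (\<lambda>z. h (of_real r * exp (\<i> * z)))"
  have inb: "of_real r * exp (\<i> * of_real s) \<in> ball (0::complex) 1"
    using r0 r1 by (simp add: norm_mult)
  have dh: "(h has_field_derivative deriv h (of_real r * exp (\<i> * of_real s))) (at (of_real r * exp (\<i> * of_real s)))"
    using holomorphic_on_imp_differentiable_at[OF hol _ inb] by (simp add: field_differentiable_derivI)
  have "(H has_field_derivative deriv h (of_real r * exp (\<i> * of_real s)) * (of_real r * (exp (\<i> * of_real s) * \<i>))) (at (of_real s))"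
    unfolding H_def
    by (rule DERIV_chain2[where f=h and g="\<lambda>z. of_real r * exp (\<i> * z)" and x="of_real s", OF dh]) (auto intro!: derivative_eq_intros)
  then have "((\<lambda>x. H (of_real x)) has_vector_derivative deriv h (of_real r * exp (\<i> * of_real s)) * (of_real r * (exp (\<i> * of_real s) * \<i>))) (at s)"
    by (rule has_vector_derivative_real_field)
  then have "((\<lambda>x. Re (H (of_real x))) has_field_derivative Re (deriv h (of_real r * exp (\<i> * of_real s)) * (of_real r * (exp (\<i> * of_real s) * \<i>)))) (at s)"
    by (rule has_field_derivative_Re)
  then show ?thesis by (simp add: H_def cis_conv_exp mult_ac)
qed

lemma circle_re_bound:
  fixes h :: "complex \<Rightarrow> complex" and P Q :: "complex poly" and r :: real
  assumes hol: "h holomorphic_on ball 0 1" and bd: "\<And>z. norm z < 1 \<Longrightarrow> norm (h z) \<le> M"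
    and eq: "\<And>z. norm z < 1 \<Longrightarrow> poly Q z \<noteq> 0 \<Longrightarrow> h z = poly P z / poly Q z"
    and Q0: "Q \<noteq> 0" and dP: "degree P \<le> n" and dQ: "degree Q \<le> n" and r0: "0 < r" and r1: "r < 1"
  shows "integral {0..2*pi} (\<lambda>s. \<bar>Re (deriv h (of_real r * cis s) * (\<i> * of_real r * cis s))\<bar>) \<le> 2 * M * (7*n+3)"
proof -
  define u' where "u' = (\<lambda>s. Re (deriv h (of_real r * cis s) * (\<i> * of_real r * cis s)))"
  define u where "u = (\<lambda>s. Re (h (of_real r * cis s)))"
  have "norm (h 0) \<le> M" using bd[of 0] by simp
  then have M0: "0 \<le> M" using norm_ge_zero order_trans by blast
  have der: "\<And>s. (u has_real_derivative u' s) (at s)"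
    unfolding u_def u'_def by (rule circle_deriv[OF hol r0 r1])
  have inb: "of_real r * cis s \<in> ball (0::complex) 1" for s
    using r0 r1 by (simp add: norm_mult)
  have cd: "continuous_on (ball 0 1) (deriv h)"
    by (intro holomorphic_on_imp_continuous_on holomorphic_deriv hol) auto
  have cont: "continuous_on UNIV u'"
    unfolding u'_def
    by (intro continuous_intros continuous_on_compose2[OF cd]) (use r0 r1 in \<open>auto simp: norm_mult\<close>)
  have ubd: "\<And>s. \<bar>u s\<bar> \<le> M"
    unfolding u_def using bd inb abs_Re_le_cmod order_trans by (metis mem_ball_0)
  from zeros_count[OF hol eq Q0 dP dQ r0 r1]
  have "(finite {s\<in>{0<..<2*pi}. u' s = 0} \<and> card {s\<in>{0<..<2*pi}. u' s = 0} \<le> 7*n+2)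
      \<or> (\<exists>E. finite E \<and> (\<forall>s\<in>{0<..<2*pi}-E. u' s = 0))" unfolding u'_def by blast
  then show ?thesis
  proof
    assume a: "finite {s\<in>{0<..<2*pi}. u' s = 0} \<and> card {s\<in>{0<..<2*pi}. u' s = 0} \<le> 7*n+2"
    have "integral {0..2*pi} (\<lambda>x. \<bar>u' x\<bar>) \<le> 2 * M * real (7*n+2 + 1)"
      using a by (intro var_bound[OF der cont ubd]) auto
    then show ?thesis unfolding u'_def by (simp add: add.commute)
  next
    assume "\<exists>E. finite E \<and> (\<forall>s\<in>{0<..<2*pi}-E. u' s = 0)"
    then obtain E where E: "finite E" "\<forall>s\<in>{0<..<2*pi}-E. u' s = 0" by blast
    have "((\<lambda>x. \<bar>u' x\<bar>) has_integral 0) {0..2*pi}"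
    proof (rule has_integral_spike_finite[OF _ _ has_integral_0, of "E \<union> {0, 2*pi}"])
      fix x assume "x \<in> {0..2*pi} - (E \<union> {0, 2*pi})"
      then have "x \<in> {0<..<2*pi} - E" by auto
      then show "\<bar>u' x\<bar> = 0" using E by auto
    qed (use E in auto)
    then have "integral {0..2*pi} (\<lambda>x. \<bar>u' x\<bar>) = 0" by (rule integral_unique)
    then show ?thesis unfolding u'_def using M0 by simp
  qed
qed

lemma circle_bound:
  fixes g :: "complex \<Rightarrow> complex" and P Q :: "complex poly" and r :: real
  assumes hol: "g holomorphic_on ball 0 1" and bd: "\<And>z. norm z < 1 \<Longrightarrow> norm (g z) \<le> M"
    and eq: "\<And>z. norm z < 1 \<Longrightarrow> poly Q z \<noteq> 0 \<Longrightarrow> g z = poly P z / poly Q z"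
    and Q0: "Q \<noteq> 0" and dP: "degree P \<le> n" and dQ: "degree Q \<le> n" and r0: "0 < r" and r1: "r < 1"
  shows "integral {0..2*pi} (\<lambda>s. norm (deriv g (of_real r * cis s))) \<le> 4 * M * (7*n+3) / r"
proof -
  define g2 where "g2 = (\<lambda>z. - \<i> * g z)"
  have hol2: "g2 holomorphic_on ball 0 1" unfolding g2_def by (intro holomorphic_intros hol)
  have bd2: "\<And>z. norm z < 1 \<Longrightarrow> norm (g2 z) \<le> M" using bd by (simp add: g2_def norm_mult)
  have eq2: "\<And>z. norm z < 1 \<Longrightarrow> poly Q z \<noteq> 0 \<Longrightarrow> g2 z = poly (smult (- \<i>) P) z / poly Q z"
    using eq by (simp add: g2_def)
  have dP2: "degree (smult (- \<i>) P) \<le> n" using dP by simp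
  have inb: "of_real r * cis s \<in> ball (0::complex) 1" for s
    using r0 r1 by (simp add: norm_mult)
  have dg2: "deriv g2 (of_real r * cis s) = - \<i> * deriv g (of_real r * cis s)" for s
    unfolding g2_def
    by (rule deriv_cmult) (rule holomorphic_on_imp_differentiable_at[OF hol _ inb], simp)
  define w where "w = (\<lambda>s. deriv g (of_real r * cis s) * (\<i> * of_real r * cis s))"
  have I1: "integral {0..2*pi} (\<lambda>s. \<bar>Re (w s)\<bar>) \<le> 2 * M * (7*n+3)"
    unfolding w_def by (rule circle_re_bound[OF hol bd eq Q0 dP dQ r0 r1])
  have I2: "integral {0..2*pi} (\<lambda>s. \<bar>Im (w s)\<bar>) \<le> 2 * M * (7*n+3)"
  proof -
    have "integral {0..2*pi} (\<lambda>s. \<bar>Re (deriv g2 (of_real r * cis s) * (\<i> * of_real r * cis s))\<bar>) \<le> 2 * M * (7*n+3)"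
      by (rule circle_re_bound[OF hol2 bd2 eq2 Q0 dP2 dQ r0 r1])
    moreover have "\<And>s. Re (deriv g2 (of_real r * cis s) * (\<i> * of_real r * cis s)) = Im (w s)"
      by (simp add: dg2 w_def)
    ultimately show ?thesis by simp
  qed
  have cd: "continuous_on (ball 0 1) (deriv g)"
    by (intro holomorphic_on_imp_continuous_on holomorphic_deriv hol) auto
  have cw: "continuous_on UNIV w"
    unfolding w_def by (intro continuous_intros continuous_on_compose2[OF cd]) (use r0 r1 in \<open>auto simp: norm_mult\<close>)
  have int1: "(\<lambda>s. \<bar>Re (w s)\<bar>) integrable_on {0..2*pi}"
    by (intro integrable_continuous_interval continuous_intros continuous_on_subset[OF cw]) auto
  have int2: "(\<lambda>s. \<bar>Im (w s)\<bar>) integrable_on {0..2*pi}"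
    by (intro integrable_continuous_interval continuous_intros continuous_on_subset[OF cw]) auto
  have int0: "(\<lambda>s. norm (deriv g (of_real r * cis s))) integrable_on {0..2*pi}"
    by (intro integrable_continuous_interval continuous_intros continuous_on_compose2[OF cd]) (use r0 r1 in \<open>auto simp: norm_mult\<close>)
  have int3: "(\<lambda>s. (1/r) * (\<bar>Re (w s)\<bar> + \<bar>Im (w s)\<bar>)) integrable_on {0..2*pi}"
    by (intro integrable_continuous_interval continuous_intros continuous_on_subset[OF cw]) auto
  have pw: "norm (deriv g (of_real r * cis s)) \<le> (1/r) * (\<bar>Re (w s)\<bar> + \<bar>Im (w s)\<bar>)" for s
  proof -
    have "norm (w s) = r * norm (deriv g (of_real r * cis s))" using r0 by (simp add: w_def norm_mult)
    then have "norm (deriv g (of_real r * cis s)) = norm (w s) / r" using r0 by simp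
    also have "\<dots> \<le> (\<bar>Re (w s)\<bar> + \<bar>Im (w s)\<bar>) / r" using r0 cmod_le by (simp add: divide_right_mono)
    finally show ?thesis by simp
  qed
  have "integral {0..2*pi} (\<lambda>s. norm (deriv g (of_real r * cis s)))
        \<le> integral {0..2*pi} (\<lambda>s. (1/r) * (\<bar>Re (w s)\<bar> + \<bar>Im (w s)\<bar>))"
    by (rule integral_le[OF int0 int3 pw])
  also have "\<dots> = (1/r) * (integral {0..2*pi} (\<lambda>s. \<bar>Re (w s)\<bar>) + integral {0..2*pi} (\<lambda>s. \<bar>Im (w s)\<bar>))"
    using int1 int2 by (simp add: integral_add integral_mult[symmetric] integrable_add)
  also have "\<dots> \<le> (1/r) * (4 * M * (7*n+3))"
    using I1 I2 r0 by (intro mult_left_mono) auto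
  finally show ?thesis by simp
qed



lemma cball_sub: fixes t :: complex assumes "norm t + R < 1" shows "cball t R \<subseteq> ball 0 1"
proof
  fix x assume "x \<in> cball t R"
  then have "norm (x - t) \<le> R" by (simp add: dist_norm norm_minus_commute)
  moreover have "norm x \<le> norm t + norm (x - t)" by (rule norm_triangle_sub)
  ultimately show "x \<in> ball 0 1" using assms by simp
qed

lemma cauchy_dn:
  fixes g :: "complex \<Rightarrow> complex"
  assumes hol: "g holomorphic_on ball 0 1" and bd: "\<And>z. norm z < 1 \<Longrightarrow> norm (g z) \<le> M"
    and R: "0 < R" "norm t + R < 1"
  shows "norm ((deriv ^^ n) g t) \<le> fact n * M / R ^ n"
proof (rule Cauchy_inequality)
  have sub: "cball t R \<subseteq> ball 0 1" by (rule cball_sub[OF R(2)])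
  show "g holomorphic_on ball t R" using hol sub ball_subset_cball by (blast intro: holomorphic_on_subset)
  show "continuous_on (cball t R) g"
    using holomorphic_on_imp_continuous_on[OF hol] sub continuous_on_subset by blast
  show "0 < R" by (rule R)
  fix x assume "norm (t - x) = R"
  then have "x \<in> cball t R" by (simp add: dist_norm)
  then show "norm (g x) \<le> M" using sub bd by auto
qed

lemma cauchy_d1:
  fixes g :: "complex \<Rightarrow> complex"
  assumes hol: "g holomorphic_on ball 0 1" and bd: "\<And>z. norm z < 1 \<Longrightarrow> norm (g z) \<le> M"
    and R: "0 < R" "norm t + R < 1"
  shows "norm (deriv g t) \<le> M / R"
  using cauchy_dn[OF hol bd R, of 1] by simp

lemma cauchy_d2:
  fixes g :: "complex \<Rightarrow> complex"
  assumes hol: "g holomorphic_on ball 0 1" and bd: "\<And>z. norm z < 1 \<Longrightarrow> norm (g z) \<le> M"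
    and R: "0 < R" "norm t + R < 1"
  shows "norm (deriv (deriv g) t) \<le> 2 * M / R^2"
  using cauchy_dn[OF hol bd R, of 2] by (simp add: numeral_2_eq_2)

lemma deriv_lip:
  fixes g :: "complex \<Rightarrow> complex"
  assumes hol: "g holomorphic_on ball 0 1" and bd: "\<And>z. norm z < 1 \<Longrightarrow> norm (g z) \<le> M"
    and R: "0 < R" "norm z0 + 2 * R < 1" and t: "norm (t - z0) \<le> R"
  shows "norm (deriv g t - deriv g z0) \<le> 2 * M / R^2 * norm (t - z0)"
proof -
  have sub: "cball z0 R \<subseteq> ball 0 1" by (rule cball_sub) (use R in auto)
  have hd: "deriv g holomorphic_on ball 0 1" by (intro holomorphic_deriv hol) auto
  show ?thesis
  proof (rule field_differentiable_bound[of "cball z0 R" "deriv g" "\<lambda>x. deriv (deriv g) x"])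
    show "convex (cball z0 R)" by simp
    fix x assume x: "x \<in> cball z0 R"
    then have xb: "x \<in> ball 0 1" using sub by auto
    show "(deriv g has_field_derivative deriv (deriv g) x) (at x within cball z0 R)"
      using holomorphic_on_imp_differentiable_at[OF hd _ xb]
      by (auto intro: field_differentiable_derivI has_field_derivative_at_within)
    have "norm x \<le> norm z0 + norm (x - z0)" by (rule norm_triangle_sub)
    moreover have "norm (x - z0) \<le> R" using x by (simp add: dist_norm norm_minus_commute)
    ultimately have "norm x + R < 1" using R by linarith
    then show "norm (deriv (deriv g) x) \<le> 2 * M / R^2" using cauchy_d2[OF hol bd R(1)] by simp
  next
    show "t \<in> cball z0 R" using t by (simp add: dist_norm norm_minus_commute)
    show "z0 \<in> cball z0 R" using R by simp
  qed
qed


lemma taylor1: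
  fixes g :: "complex \<Rightarrow> complex"
  assumes hol: "g holomorphic_on ball 0 1" and bd: "\<And>z. norm z < 1 \<Longrightarrow> norm (g z) \<le> M"
    and R: "0 < R" "norm z0 + 2 * R < 1" and hR: "norm h \<le> R"
  shows "norm (g (z0 + h) - g z0 - h * deriv g z0) \<le> 2 * M / R^2 * (norm h)^2"
proof -
  let ?S = "closed_segment z0 (z0 + h)"
  have phi: "norm ((g (z0 + h) - (z0 + h) * deriv g z0) - (g z0 - z0 * deriv g z0)) \<le> (2 * M / R^2 * norm h) * norm ((z0 + h) - z0)"
  proof (rule field_differentiable_bound[of ?S "\<lambda>x. g x - x * deriv g z0" "\<lambda>x. deriv g x - deriv g z0"])
    show "convex ?S" by simp
    fix x assume x: "x \<in> ?S"
    have dx: "norm (x - z0) \<le> norm h"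
      using dist_in_closed_segment[OF x] by (simp add: dist_norm norm_minus_commute)
    have "norm x \<le> norm z0 + norm (x - z0)" by (rule norm_triangle_sub)
    then have xb: "x \<in> ball 0 1" using dx hR R by simp
    have "(g has_field_derivative deriv g x) (at x)"
      using holomorphic_on_imp_differentiable_at[OF hol _ xb] by (auto intro: field_differentiable_derivI)
    moreover have "((\<lambda>x. x * deriv g z0) has_field_derivative 1 * deriv g z0) (at x)"
      by (rule DERIV_cmult_right[OF DERIV_ident])
    ultimately have "((\<lambda>x. g x - x * deriv g z0) has_field_derivative deriv g x - 1 * deriv g z0) (at x)"
      by (rule DERIV_diff)
    then show "((\<lambda>x. g x - x * deriv g z0) has_field_derivative deriv g x - deriv g z0) (at x within ?S)"
      by (simp add: has_field_derivative_at_within)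
    have "norm (deriv g x - deriv g z0) \<le> 2 * M / R^2 * norm (x - z0)"
      using deriv_lip[OF hol bd R order_trans[OF dx hR]] by simp
    also have "\<dots> \<le> 2 * M / R^2 * norm h"
    proof (rule mult_left_mono[OF dx])
      have "norm (g 0) \<le> M" using bd[of 0] by simp
      then have "0 \<le> M" using norm_ge_zero order_trans by blast
      then show "0 \<le> 2 * M / R^2" by simp
    qed
    finally show "norm (deriv g x - deriv g z0) \<le> 2 * M / R^2 * norm h" .
  qed (auto simp: ends_in_segment)
  have e: "g (z0 + h) - g z0 - h * deriv g z0 = (g (z0 + h) - (z0 + h) * deriv g z0) - (g z0 - z0 * deriv g z0)"
    by (simp add: algebra_simps)
  have "norm (g (z0 + h) - g z0 - h * deriv g z0) \<le> (2 * M / R^2 * norm h) * norm ((z0 + h) - z0)"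
    unfolding e by (rule phi)
  then show ?thesis by (simp add: power2_eq_square)
qed

lemma holo_w:
  fixes f :: "complex \<Rightarrow> complex \<Rightarrow> complex"
  assumes hf: "\<And>w. norm w < 1 \<Longrightarrow> (\<lambda>u. f u w) holomorphic_on ball 0 1"
    and hg: "\<And>z. norm z < 1 \<Longrightarrow> (\<lambda>v. f z v) holomorphic_on ball 0 1"
    and bd: "\<And>z w. norm z < 1 \<Longrightarrow> norm w < 1 \<Longrightarrow> norm (f z w) \<le> M"
    and z0: "norm z0 < 1"
  shows "(\<lambda>v. deriv (\<lambda>u. f u v) z0) holomorphic_on ball 0 1"
proof -
  have M0: "0 \<le> M" using bd[of 0 0] norm_ge_zero[of "f 0 0"] by (smt (verit) norm_zero)
  have loc: "(\<lambda>v. deriv (\<lambda>u. f u v) z0) field_differentiable (at w0)" if w0: "norm w0 < 1" for w0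
  proof -
    define \<delta> where "\<delta> = (1 - norm w0) / 2"
    define R where "R = (1 - norm z0) / 4"
    have d0: "0 < \<delta>" using w0 by (simp add: \<delta>_def)
    have "norm w0 + \<delta> < 1" using w0 unfolding \<delta>_def by (simp add: field_simps)
    then have dsub: "cball w0 \<delta> \<subseteq> ball 0 1" by (rule cball_sub)
    have R0: "0 < R" and R2: "norm z0 + 2 * R < 1" using z0 by (auto simp: R_def field_simps)
    define hn where "hn = (\<lambda>n::nat. complex_of_real (R / (real n + 1)))"
    have cn: "(of_nat n + 1 :: complex) \<noteq> 0" for n by (metis add.commute of_nat_Suc of_nat_neq_0)
    have hn0: "hn n \<noteq> 0" for n using R0 cn by (simp add: hn_def)
    have hnR': "norm (hn n) = R / (real n + 1)" for n
      unfolding hn_def norm_of_real using R0 by simp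
    have hnR: "norm (hn n) \<le> R" for n
    proof -
      have "R / (real n + 1) \<le> R / 1" using R0 by (intro divide_left_mono) auto
      then show ?thesis using hnR' by simp
    qed
    have hnb: "norm (z0 + hn n) < 1" for n
    proof -
      have "norm (z0 + hn n) \<le> norm z0 + norm (hn n)" by (rule norm_triangle_ineq)
      then show ?thesis using hnR[of n] R2 R0 by linarith
    qed
    define D where "D = (\<lambda>n v. (f (z0 + hn n) v - f z0 v) / hn n)"
    define K where "K = 2 * M / R^2"
    have K0: "0 \<le> K" using M0 by (simp add: K_def)
    have cont: "\<forall>\<^sub>F n in sequentially. continuous_on (cball w0 \<delta>) (D n) \<and> D n holomorphic_on ball w0 \<delta>"
    proof (rule always_eventually, intro allI conjI)
      fix n
      have h1: "(\<lambda>v. f (z0 + hn n) v) holomorphic_on ball 0 1" by (rule hg[OF hnb])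
      have h2: "(\<lambda>v. f z0 v) holomorphic_on ball 0 1" by (rule hg[OF z0])
      have hD: "D n holomorphic_on ball 0 1" unfolding D_def
        by (intro holomorphic_intros h1 h2 hn0)
      show "continuous_on (cball w0 \<delta>) (D n)"
        using holomorphic_on_imp_continuous_on[OF hD] dsub continuous_on_subset by blast
      show "D n holomorphic_on ball w0 \<delta>"
        using hD dsub ball_subset_cball by (blast intro: holomorphic_on_subset)
    qed
    have ul: "uniform_limit (cball w0 \<delta>) D (\<lambda>v. deriv (\<lambda>u. f u v) z0) sequentially"
      unfolding uniform_limit_iff dist_norm eventually_sequentially
    proof (intro allI impI)
      fix e :: real assume e: "0 < e"
      obtain N :: nat where N: "K * R / e < real N" using reals_Archimedean2 by blast
      show "\<exists>N. \<forall>n\<ge>N. \<forall>v\<in>cball w0 \<delta>. norm (D n v - deriv (\<lambda>u. f u v) z0) < e"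
      proof (intro exI allI impI ballI)
        fix n v assume n: "N \<le> n" and v: "v \<in> cball w0 \<delta>"
        have vb: "norm v < 1" using v dsub by auto
        have tay: "norm (f (z0 + hn n) v - f z0 v - hn n * deriv (\<lambda>u. f u v) z0) \<le> K * (norm (hn n))^2"
          unfolding K_def by (rule taylor1[OF hf[OF vb] _ R0 R2 hnR]) (use bd vb in auto)
        have "D n v - deriv (\<lambda>u. f u v) z0 = (f (z0 + hn n) v - f z0 v - hn n * deriv (\<lambda>u. f u v) z0) / hn n"
          using hn0[of n] by (simp add: D_def field_simps)
        then have "norm (D n v - deriv (\<lambda>u. f u v) z0) = norm (f (z0 + hn n) v - f z0 v - hn n * deriv (\<lambda>u. f u v) z0) / norm (hn n)"
          by (simp add: norm_divide)
        also have "\<dots> \<le> K * (norm (hn n))^2 / norm (hn n)"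
          using tay hn0[of n] by (simp add: divide_right_mono)
        also have "\<dots> = K * norm (hn n)" using hn0[of n] by (simp add: power2_eq_square)
        also have "\<dots> = K * R / (real n + 1)" by (simp add: hnR')
        also have "\<dots> < e"
        proof -
          have "K * R / e < real n + 1" using N n by linarith
          then have "K * R < e * (real n + 1)" using e by (simp add: field_simps)
          then show ?thesis by (simp add: field_simps)
        qed
        finally show "norm (D n v - deriv (\<lambda>u. f u v) z0) < e" .
      qed
    qed
    obtain "continuous_on (cball w0 \<delta>) (\<lambda>v. deriv (\<lambda>u. f u v) z0)"
      "(\<lambda>v. deriv (\<lambda>u. f u v) z0) holomorphic_on ball w0 \<delta>"
      by (rule holomorphic_uniform_limit[OF cont ul]) simp
    then show ?thesis using d0 by (intro holomorphic_on_imp_differentiable_at[of _ "ball w0 \<delta>"]) auto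
  qed
  show ?thesis unfolding holomorphic_on_def
    using loc by (auto intro: field_differentiable_at_within)
qed

lemma cont_F:
  fixes f :: "complex \<Rightarrow> complex \<Rightarrow> complex"
  assumes hf: "\<And>w. norm w < 1 \<Longrightarrow> (\<lambda>u. f u w) holomorphic_on ball 0 1"
    and hg: "\<And>z. norm z < 1 \<Longrightarrow> (\<lambda>v. f z v) holomorphic_on ball 0 1"
    and bd: "\<And>z w. norm z < 1 \<Longrightarrow> norm w < 1 \<Longrightarrow> norm (f z w) \<le> M"
  shows "continuous_on {p. bidisk_pt (fst p) (snd p)} (\<lambda>p. deriv (\<lambda>u. f u (snd p)) (fst p))"
  unfolding continuous_on_iff
proof (intro ballI allI impI)
  fix p :: "complex \<times> complex" and e :: real
  assume p: "p \<in> {p. bidisk_pt (fst p) (snd p)}" and e: "0 < e"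
  obtain z0 w0 where pz: "p = (z0, w0)" by (cases p)
  have z0: "norm z0 < 1" and w0: "norm w0 < 1" using p pz by (auto simp: bidisk_pt_def)
  have M0: "0 \<le> M" using bd[of 0 0] norm_ge_zero[of "f 0 0"] by (smt (verit) norm_zero)
  define R where "R = (1 - norm z0) / 4"
  have R0: "0 < R" and R2: "norm z0 + 2 * R < 1" using z0 by (auto simp: R_def field_simps)
  define K where "K = 2 * M / R^2"
  have K0: "0 \<le> K" using M0 by (simp add: K_def)
  have hw: "(\<lambda>v. deriv (\<lambda>u. f u v) z0) holomorphic_on ball 0 1" by (rule holo_w[OF hf hg bd z0])
  have "continuous_on (ball 0 1) (\<lambda>v. deriv (\<lambda>u. f u v) z0)"
    by (rule holomorphic_on_imp_continuous_on[OF hw])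
  then obtain d1 where d1: "0 < d1" "\<And>w. w \<in> ball 0 1 \<Longrightarrow> dist w w0 < d1 \<Longrightarrow>
      dist (deriv (\<lambda>u. f u w) z0) (deriv (\<lambda>u. f u w0) z0) < e / 2"
    using w0 e unfolding continuous_on_iff by (metis half_gt_zero mem_ball_0)
  define d where "d = min d1 (min R (e / (2 * (K + 1))))"
  have d0: "0 < d" using d1 R0 e K0 by (simp add: d_def)
  show "\<exists>d>0. \<forall>x'\<in>{p. bidisk_pt (fst p) (snd p)}. dist x' p < d \<longrightarrow>
          dist (deriv (\<lambda>u. f u (snd x')) (fst x')) (deriv (\<lambda>u. f u (snd p)) (fst p)) < e"
  proof (intro exI conjI ballI impI, rule d0)
    fix q :: "complex \<times> complex" assume q: "q \<in> {p. bidisk_pt (fst p) (snd p)}" and dq: "dist q p < d"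
    obtain z w where qz: "q = (z, w)" by (cases q)
    have z: "norm z < 1" and w: "norm w < 1" using q qz by (auto simp: bidisk_pt_def)
    have dz: "dist z z0 < d" using dq dist_fst_le[of q p] pz qz by simp
    have dw: "dist w w0 < d" using dq dist_snd_le[of q p] pz qz by simp
    have zR: "norm (z - z0) \<le> R" using dz by (simp add: d_def dist_norm)
    have "norm (deriv (\<lambda>u. f u w) z - deriv (\<lambda>u. f u w) z0) \<le> K * norm (z - z0)"
      unfolding K_def by (rule deriv_lip[OF hf[OF w] _ R0 R2 zR]) (use bd w in auto)
    also have "\<dots> \<le> K * (e / (2 * (K + 1)))"
      using dz K0 by (intro mult_left_mono) (auto simp: d_def dist_norm)
    also have "\<dots> < e / 2"
    proof -
      have "K * (e / (2 * (K + 1))) = (e / 2) * (K / (K + 1))" by (simp add: field_simps)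
      also have "\<dots> < (e / 2) * 1" using K0 e by (intro mult_strict_left_mono) auto
      finally show ?thesis by simp
    qed
    finally have a: "dist (deriv (\<lambda>u. f u w) z) (deriv (\<lambda>u. f u w) z0) < e / 2" by (simp add: dist_norm)
    have b: "dist (deriv (\<lambda>u. f u w) z0) (deriv (\<lambda>u. f u w0) z0) < e / 2"
      using d1(2)[of w] w dw by (simp add: d_def)
    have "dist (deriv (\<lambda>u. f u w) z) (deriv (\<lambda>u. f u w0) z0) < e"
      using dist_triangle[of "deriv (\<lambda>u. f u w) z" "deriv (\<lambda>u. f u w0) z0" "deriv (\<lambda>u. f u w) z0"]
        a b by linarith
    then show "dist (deriv (\<lambda>u. f u (snd q)) (fst q)) (deriv (\<lambda>u. f u (snd p)) (fst p)) < e"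
      using pz qz by simp
  qed
qed



lemma an_hol:
  assumes an: "analytic_bidisk f"
  shows "\<And>w. norm w < 1 \<Longrightarrow> (\<lambda>u. f u w) holomorphic_on ball 0 1"
    and "\<And>z. norm z < 1 \<Longrightarrow> (\<lambda>v. f z v) holomorphic_on ball 0 1"
  using an unfolding analytic_bidisk_def bidisk_pt_def holomorphic_on_def
  by (auto intro: field_differentiable_at_within)

lemma analytic_deriv_z:
  assumes an: "analytic_bidisk f" and bdd: "bounded_bidisk f"
  shows "analytic_bidisk (\<lambda>z w. deriv (\<lambda>u. f u w) z)"
proof -
  obtain M where M: "\<And>z w. bidisk_pt z w \<Longrightarrow> norm (f z w) \<le> M" using bdd unfolding bounded_bidisk_def by blast
  have bd: "\<And>z w. norm z < 1 \<Longrightarrow> norm w < 1 \<Longrightarrow> norm (f z w) \<le> M" using M by (simp add: bidisk_pt_def)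
  note hf = an_hol(1)[OF an] and hg = an_hol(2)[OF an]
  show ?thesis unfolding analytic_bidisk_def
  proof (intro conjI allI impI)
    show "continuous_on {p. bidisk_pt (fst p) (snd p)} (\<lambda>p. deriv (\<lambda>u. f u (snd p)) (fst p))"
      by (rule cont_F[OF hf hg bd])
  next
    fix z w assume zw: "bidisk_pt z w"
    then have z: "norm z < 1" and w: "norm w < 1" by (auto simp: bidisk_pt_def)
    have "deriv (\<lambda>u. f u w) holomorphic_on ball 0 1" by (intro holomorphic_deriv hf[OF w]) auto
    then show "(\<lambda>u. deriv (\<lambda>u. f u w) u) field_differentiable at z"
      using z by (intro holomorphic_on_imp_differentiable_at[of _ "ball 0 1"]) auto
    show "(\<lambda>v. deriv (\<lambda>u. f u v) z) field_differentiable at w"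
      using holo_w[OF hf hg bd z] w by (intro holomorphic_on_imp_differentiable_at[of _ "ball 0 1"]) auto
  qed
qed



definition polyw :: "(nat \<Rightarrow> nat \<Rightarrow> complex) \<Rightarrow> nat \<Rightarrow> complex \<Rightarrow> complex poly" where
  "polyw c n w = (\<Sum>i\<le>n. monom (\<Sum>j\<le>n. c i j * w^j) i)"

lemma poly_polyw: "poly (polyw c n w) z = poly2 c n z w"
  unfolding polyw_def poly2_def poly_sum poly_monom
  by (simp add: sum_distrib_left mult_ac)

lemma degree_polyw: "degree (polyw c n w) \<le> n"
  unfolding polyw_def by (rule degree_sum_le) (auto intro: order_trans[OF degree_monom_le])

lemma coeff_polyw: "i \<le> n \<Longrightarrow> coeff (polyw c n w) i = (\<Sum>j\<le>n. c i j * w^j)"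
  unfolding polyw_def coeff_sum by simp

lemma polyw_zero:
  assumes "i0 \<le> n" "j0 \<le> n" "c i0 j0 \<noteq> 0"
  obtains C0 where "C0 \<noteq> 0" "\<And>w. polyw c n w = 0 \<Longrightarrow> poly C0 w = 0"
proof
  define C0 where "C0 = (\<Sum>j\<le>n. monom (c i0 j) j)"
  have "coeff C0 j0 = c i0 j0" using assms by (simp add: C0_def coeff_sum)
  then show "C0 \<noteq> 0" using assms by auto
  fix w assume "polyw c n w = 0"
  then have "coeff (polyw c n w) i0 = 0" by simp
  then show "poly C0 w = 0" using assms(1) by (simp add: coeff_polyw C0_def poly_sum poly_monom)
qed

lemma torus_bound:
  fixes F :: "complex \<Rightarrow> complex \<Rightarrow> complex" and r C :: real
  assumes contF: "continuous_on {p. bidisk_pt (fst p) (snd p)} (\<lambda>p. F (fst p) (snd p))"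
    and r0: "0 < r" and r1: "r < 1" and C0: "0 \<le> C" and finB: "finite Bad"
    and inner: "\<And>b. b \<in> {0..2*pi} \<Longrightarrow> b \<notin> Bad \<Longrightarrow>
        integral {0..2*pi} (\<lambda>s. norm (F (of_real r * cis s) (of_real r * cis b))) \<le> C"
  shows "torus_Lp_r 1 F r \<le> ennreal (1 / (4 * pi\<^sup>2)) * ennreal (C * (2 * pi))"
proof -
  define A where "A = {0..2*pi}"
  define h where "h = (\<lambda>x::real\<times>real. norm (F (of_real r * cis (fst x)) (of_real r * cis (snd x))))"
  have inD: "(of_real r * cis (fst x), of_real r * cis (snd x)) \<in> {p. bidisk_pt (fst p) (snd p)}" for x :: "real \<times> real"
    using r0 r1 by (simp add: bidisk_pt_def norm_mult)
  have hcont: "continuous_on UNIV h"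
    unfolding h_def
    by (intro continuous_intros continuous_on_compose2[OF contF, of UNIV "\<lambda>x. (of_real r * cis (fst x), of_real r * cis (snd x))", simplified])
       (use inD in auto)
  have hB[measurable]: "h \<in> borel_measurable borel" by (rule borel_measurable_continuous_onI[OF hcont])
  have AB[measurable]: "A \<times> A \<in> sets borel" unfolding A_def by (intro borel_closed closed_Times) auto
  have AB1[measurable]: "A \<in> sets borel" unfolding A_def by (intro borel_closed) auto
  define \<Phi> where "\<Phi> = (\<lambda>x. ennreal (h x) * indicator (A \<times> A) x)"
  have meas: "\<Phi> \<in> borel_measurable (lborel \<Otimes>\<^sub>M lborel)"
    unfolding lborel_prod measurable_lborel2 \<Phi>_def by measurable
  have T: "torus_Lp_r 1 F r = ennreal (1 / (4 * pi\<^sup>2)) * integral\<^sup>N (lborel \<Otimes>\<^sub>M lborel) \<Phi>"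
    unfolding torus_Lp_r_def \<Phi>_def h_def A_def by simp
  have hc1: "continuous_on UNIV (\<lambda>a. h (a, b))" for b
    by (intro continuous_on_compose2[OF hcont] continuous_intros) auto
  have inner_eq: "(\<integral>\<^sup>+ a. \<Phi> (a, b) \<partial>lborel) = (\<integral>\<^sup>+ a. ennreal (h (a, b)) * indicator A a \<partial>lborel) * indicator A b" for b
  proof -
    have mb: "(\<lambda>a. ennreal (h (a, b)) * indicator A a) \<in> borel_measurable lborel"
      using borel_measurable_continuous_onI[OF hc1[of b]] unfolding measurable_lborel2 by measurable
    have "(\<integral>\<^sup>+ a. \<Phi> (a, b) \<partial>lborel) = (\<integral>\<^sup>+ a. ennreal (h (a, b)) * indicator A a * indicator A b \<partial>lborel)"
      unfolding \<Phi>_def by (simp add: indicator_times mult.assoc)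
    also have "\<dots> = (\<integral>\<^sup>+ a. ennreal (h (a, b)) * indicator A a \<partial>lborel) * indicator A b"
      by (rule nn_integral_multc[OF mb])
    finally show ?thesis .
  qed
  have good: "(\<integral>\<^sup>+ a. ennreal (h (a, b)) * indicator A a \<partial>lborel) \<le> ennreal C" if b: "b \<in> A" "b \<notin> Bad" for b
  proof -
    have "(\<lambda>a. h (a, b)) integrable_on A"
      unfolding A_def by (intro integrable_continuous_interval continuous_on_subset[OF hc1]) auto
    then have "((\<lambda>a. h (a, b)) has_integral integral A (\<lambda>a. h (a, b))) A" by (rule integrable_integral)
    then have "(\<integral>\<^sup>+ a. ennreal (h (a, b)) * indicator A a \<partial>lborel) = ennreal (integral A (\<lambda>a. h (a, b)))"
      by (intro nn_integral_has_integral_lebesgue') (auto simp: h_def)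
    also have "\<dots> \<le> ennreal C"
      using inner[of b] b by (intro ennreal_leI) (simp add: A_def h_def)
    finally show ?thesis .
  qed
  have ae: "AE b in lborel. (\<integral>\<^sup>+ a. \<Phi> (a, b) \<partial>lborel) \<le> ennreal C * indicator A b"
  proof (rule AE_I'[OF finite_imp_null_set_lborel[OF finB]])
    show "{x \<in> space lborel. \<not> (\<integral>\<^sup>+ a. \<Phi> (a, x) \<partial>lborel) \<le> ennreal C * indicator A x} \<subseteq> Bad"
    proof
      fix b assume "b \<in> {x \<in> space lborel. \<not> (\<integral>\<^sup>+ a. \<Phi> (a, x) \<partial>lborel) \<le> ennreal C * indicator A x}"
      then have nb: "\<not> (\<integral>\<^sup>+ a. \<Phi> (a, b) \<partial>lborel) \<le> ennreal C * indicator A b" by simp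
      show "b \<in> Bad"
      proof (rule ccontr)
        assume "b \<notin> Bad"
        then show False using nb good[of b] by (cases "b \<in> A") (auto simp: inner_eq)
      qed
    qed
  qed
  have "integral\<^sup>N (lborel \<Otimes>\<^sub>M lborel) \<Phi> = (\<integral>\<^sup>+ b. (\<integral>\<^sup>+ a. \<Phi> (a, b) \<partial>lborel) \<partial>lborel)"
    by (rule lborel_pair.nn_integral_snd[OF meas, symmetric])
  also have "\<dots> \<le> (\<integral>\<^sup>+ b. ennreal C * indicator A b \<partial>lborel)"
    by (rule nn_integral_mono_AE[OF ae])
  also have "\<dots> = ennreal C * emeasure lborel A"
    by (rule nn_integral_cmult_indicator) (simp add: A_def)
  also have "\<dots> = ennreal (C * (2 * pi))"
    using C0 by (simp add: A_def ennreal_mult)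
  finally have "integral\<^sup>N (lborel \<Otimes>\<^sub>M lborel) \<Phi> \<le> ennreal (C * (2 * pi))" .
  then show ?thesis unfolding T by (intro mult_left_mono) auto
qed

lemma hardy_z:
  fixes f :: "complex \<Rightarrow> complex \<Rightarrow> complex"
  assumes rat: "rational_on_bidisk f" and an: "analytic_bidisk f" and bdd: "bounded_bidisk f"
  shows "hardy_bidisk 1 (\<lambda>z w. deriv (\<lambda>u. f u w) z)"
proof -
  define F where "F = (\<lambda>z w. deriv (\<lambda>u. f u w) z)"
  have anF: "analytic_bidisk F" using analytic_deriv_z[OF an bdd] by (simp add: F_def)
  then have contF: "continuous_on {p. bidisk_pt (fst p) (snd p)} (\<lambda>p. F (fst p) (snd p))"
    by (simp add: analytic_bidisk_def)
  obtain M where M: "\<And>z w. bidisk_pt z w \<Longrightarrow> norm (f z w) \<le> M" using bdd unfolding bounded_bidisk_def by blast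
  have bd: "\<And>z w. norm z < 1 \<Longrightarrow> norm w < 1 \<Longrightarrow> norm (f z w) \<le> M" using M by (simp add: bidisk_pt_def)
  have M0: "0 \<le> M" using bd[of 0 0] norm_ge_zero[of "f 0 0"] by (smt (verit) norm_zero)
  note hf = an_hol(1)[OF an]
  obtain cp cq n where nz: "\<exists>i\<le>n. \<exists>j\<le>n. cq i j \<noteq> 0"
    and eq: "\<And>z w. bidisk_pt z w \<Longrightarrow> poly2 cq n z w \<noteq> 0 \<Longrightarrow> f z w = poly2 cp n z w / poly2 cq n z w"
    using rat unfolding rational_on_bidisk_def by blast
  obtain i0 j0 where ij: "i0 \<le> n" "j0 \<le> n" "cq i0 j0 \<noteq> 0" using nz by blast
  obtain C0 where C0: "C0 \<noteq> 0" and badC: "\<And>w. polyw cq n w = 0 \<Longrightarrow> poly C0 w = 0"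
    using polyw_zero[of i0 n j0 cq, OF ij] by blast
  define C1 where "C1 = 8 * M * (7 * n + 3) + 8 * pi * M"
  have C1_0: "0 \<le> C1" using M0 by (simp add: C1_def)
  have inner: "integral {0..2*pi} (\<lambda>s. norm (F (of_real r * cis s) w)) \<le> C1"
    if r0: "0 < r" and r1: "r < 1" and w: "norm w < 1" and gd: "polyw cq n w \<noteq> 0 \<or> r \<le> 1/2" for r w
  proof -
    have bdg: "\<And>z. norm z < 1 \<Longrightarrow> norm (f z w) \<le> M" using bd w by blast
    show ?thesis
    proof (cases "r \<le> 1/2")
      case True
      have cd: "continuous_on (ball 0 1) (deriv (\<lambda>u. f u w))"
        by (intro holomorphic_on_imp_continuous_on holomorphic_deriv hf[OF w]) auto
      have intg: "(\<lambda>s. norm (F (of_real r * cis s) w)) integrable_on {0..2*pi}"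
        unfolding F_def
        by (intro integrable_continuous_interval continuous_intros continuous_on_compose2[OF cd])
           (use r0 r1 in \<open>auto simp: norm_mult\<close>)
      have pw: "norm (F (of_real r * cis s) w) \<le> 4 * M" for s
      proof -
        have "norm (of_real r * cis s) + 1/4 < 1" using True r0 by (simp add: norm_mult)
        from cauchy_d1[OF hf[OF w] bdg _ this] show ?thesis by (simp add: F_def)
      qed
      have "integral {0..2*pi} (\<lambda>s. norm (F (of_real r * cis s) w)) \<le> integral {0..2*pi} (\<lambda>s. 4 * M)"
        by (rule integral_le[OF intg]) (use pw in auto)
      also have "\<dots> = 2 * pi * (4 * M)" by simp
      also have "\<dots> \<le> C1" using M0 by (simp add: C1_def)
      finally show ?thesis .
    next
      case False
      then have Q0: "polyw cq n w \<noteq> 0" using gd by simp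
      have eqg: "\<And>z. norm z < 1 \<Longrightarrow> poly (polyw cq n w) z \<noteq> 0 \<Longrightarrow> f z w = poly (polyw cp n w) z / poly (polyw cq n w) z"
        using eq w by (simp add: poly_polyw bidisk_pt_def)
      have "integral {0..2*pi} (\<lambda>s. norm (F (of_real r * cis s) w)) \<le> 4 * M * (7*n+3) / r"
        unfolding F_def by (rule circle_bound[OF hf[OF w] bdg eqg Q0 degree_polyw degree_polyw r0 r1])
      also have "\<dots> \<le> 8 * M * (7*n+3)"
      proof -
        have "4 * M * (7*n+3) \<le> 8 * M * (7*n+3) * r" using False M0
          by (simp add: mult_left_mono[of "1/2" r "8 * M * (7*n+3)", simplified])
        then show ?thesis using r0 by (simp add: pos_divide_le_eq)
      qed
      also have "\<dots> \<le> C1" using M0 by (simp add: C1_def)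
      finally show ?thesis .
    qed
  qed
  have bound: "torus_Lp_r 1 F r \<le> ennreal (1 / (4 * pi\<^sup>2)) * ennreal (C1 * (2 * pi))"
    if r0: "0 < r" and r1: "r < 1" for r
  proof -
    define Bad where "Bad = {0, 2*pi} \<union> {b\<in>{0<..<2*pi}. poly C0 (of_real r * cis b) = 0}"
    have finB: "finite Bad"
    proof -
      have inj: "inj_on (\<lambda>b. of_real r * cis b) {b\<in>{0<..<2*pi}. poly C0 (of_real r * cis b) = 0}"
      proof (rule inj_onI)
        fix a b assume a: "a \<in> {b\<in>{0<..<2*pi}. poly C0 (of_real r * cis b) = 0}"
          and b: "b \<in> {b\<in>{0<..<2*pi}. poly C0 (of_real r * cis b) = 0}"
          and e: "of_real r * cis a = of_real r * cis b"
        have "cis a = cis b" using e r0 by simp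
        then show "a = b" using inj_onD[OF cis_inj] a b by auto
      qed
      have "finite {b\<in>{0<..<2*pi}. poly C0 (of_real r * cis b) = 0}"
        by (rule inj_on_finite[OF inj _ poly_roots_finite[OF C0]]) auto
      then show ?thesis by (simp add: Bad_def)
    qed
    show ?thesis
    proof (rule torus_bound[OF contF r0 r1 C1_0 finB])
      fix b assume b: "b \<in> {0..2*pi}" "b \<notin> Bad"
      have w: "norm (of_real r * cis b) < 1" using r0 r1 by (simp add: norm_mult)
      have "polyw cq n (of_real r * cis b) \<noteq> 0"
      proof
        assume "polyw cq n (of_real r * cis b) = 0"
        then have "poly C0 (of_real r * cis b) = 0" by (rule badC)
        then have "b \<in> Bad" using b(1) by (auto simp: Bad_def)
        then show False using b(2) by simp
      qed
      then show "integral {0..2*pi} (\<lambda>s. norm (F (of_real r * cis s) (of_real r * cis b))) \<le> C1"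
        using inner[OF r0 r1 w] by blast
    qed
  qed
  have "(SUP r\<in>{0<..<1}. torus_Lp_r 1 F r) \<le> ennreal (1 / (4 * pi\<^sup>2)) * ennreal (C1 * (2 * pi))"
    by (rule SUP_least) (use bound in auto)
  also have "\<dots> < \<infinity>" by (simp add: ennreal_mult_less_top)
  finally have "(SUP r\<in>{0<..<1}. torus_Lp_r 1 F r) < \<infinity>" .
  then show ?thesis using anF unfolding hardy_bidisk_def F_def by simp
qed


lemma poly2_swap: "poly2 (\<lambda>i j. c j i) n z w = poly2 c n w z"
  unfolding poly2_def
  by (subst sum.swap) (intro sum.cong refl, simp only: mult_ac)
lemma rational_swap:
  assumes "rational_on_bidisk f" shows "rational_on_bidisk (\<lambda>z w. f w z)"
proof -
  obtain cp cq n where nz: "\<exists>i\<le>n. \<exists>j\<le>n. cq i j \<noteq> 0"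
    and eq: "\<And>z w. bidisk_pt z w \<Longrightarrow> poly2 cq n z w \<noteq> 0 \<Longrightarrow> f z w = poly2 cp n z w / poly2 cq n z w"
    using assms unfolding rational_on_bidisk_def by blast
  show ?thesis unfolding rational_on_bidisk_def
  proof (rule exI[of _ "\<lambda>i j. cp j i"], rule exI[of _ "\<lambda>i j. cq j i"], rule exI[of _ n], intro conjI allI impI)
    show "\<exists>i\<le>n. \<exists>j\<le>n. cq j i \<noteq> 0" using nz by blast
    fix z w assume "bidisk_pt z w \<and> poly2 (\<lambda>i j. cq j i) n z w \<noteq> 0"
    then show "f w z = poly2 (\<lambda>i j. cp j i) n z w / poly2 (\<lambda>i j. cq j i) n z w"
      using eq[of w z] unfolding poly2_swap[of cq] poly2_swap[of cp] by (simp add: bidisk_pt_def)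
  qed
qed

lemma bounded_swap: assumes "bounded_bidisk f" shows "bounded_bidisk (\<lambda>z w. f w z)"
proof -
  obtain B where B: "\<And>z w. bidisk_pt z w \<Longrightarrow> norm (f z w) \<le> B"
    using assms unfolding bounded_bidisk_def by blast
  show ?thesis unfolding bounded_bidisk_def
  proof (rule exI[of _ B], intro allI impI)
    fix z w assume "bidisk_pt z w"
    then have "bidisk_pt w z" by (auto simp: bidisk_pt_def)
    then show "norm (f w z) \<le> B" by (rule B)
  qed
qed


lemma analytic_swap: "analytic_bidisk f \<Longrightarrow> analytic_bidisk (\<lambda>z w. f w z)"
  unfolding analytic_bidisk_def
proof (elim conjE, intro conjI)
  assume c: "continuous_on {p. bidisk_pt (fst p) (snd p)} (\<lambda>p. f (fst p) (snd p))"
    and d: "\<forall>z w. bidisk_pt z w \<longrightarrow> (\<lambda>u. f u w) field_differentiable at z \<and> (\<lambda>v. f z v) field_differentiable at w"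
  show "continuous_on {p. bidisk_pt (fst p) (snd p)} (\<lambda>p. f (snd p) (fst p))"
    by (rule continuous_on_compose2[OF c, of _ "\<lambda>p. (snd p, fst p)", simplified])
       (auto intro!: continuous_intros simp: bidisk_pt_def)
  show "\<forall>z w. bidisk_pt z w \<longrightarrow> (\<lambda>u. f w u) field_differentiable at z \<and> (\<lambda>v. f v z) field_differentiable at w"
    using d by (auto simp: bidisk_pt_def)
qed

lemma torus_swap:
  fixes G :: "complex \<Rightarrow> complex \<Rightarrow> complex" and r :: real
  assumes contG: "continuous_on {p. bidisk_pt (fst p) (snd p)} (\<lambda>p. G (fst p) (snd p))"
    and r0: "0 < r" and r1: "r < 1"
  shows "torus_Lp_r 1 (\<lambda>z w. G w z) r = torus_Lp_r 1 G r"
proof -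
  define A where "A = {0..2*pi}"
  define h where "h = (\<lambda>x::real\<times>real. norm (G (of_real r * cis (fst x)) (of_real r * cis (snd x))))"
  have inD: "(of_real r * cis (fst x), of_real r * cis (snd x)) \<in> {p. bidisk_pt (fst p) (snd p)}" for x :: "real \<times> real"
    using r0 r1 by (simp add: bidisk_pt_def norm_mult)
  have hcont: "continuous_on UNIV h"
    unfolding h_def
    by (intro continuous_intros continuous_on_compose2[OF contG, of UNIV "\<lambda>x. (of_real r * cis (fst x), of_real r * cis (snd x))", simplified])
       (use inD in auto)
  have hB[measurable]: "h \<in> borel_measurable borel" by (rule borel_measurable_continuous_onI[OF hcont])
  have AB[measurable]: "A \<times> A \<in> sets borel" unfolding A_def by (intro borel_closed closed_Times) auto
  define \<Phi> where "\<Phi> = (\<lambda>x. ennreal (h x) * indicator (A \<times> A) x)"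
  have meas: "\<Phi> \<in> borel_measurable (lborel \<Otimes>\<^sub>M lborel)"
    unfolding lborel_prod measurable_lborel2 \<Phi>_def by measurable
  define \<Psi> where "\<Psi> = (\<lambda>x. \<Phi> (snd x, fst x))"
  have meas2: "\<Psi> \<in> borel_measurable (lborel \<Otimes>\<^sub>M lborel)"
    unfolding \<Psi>_def using meas by measurable
  have T1: "torus_Lp_r 1 G r = ennreal (1 / (4 * pi\<^sup>2)) * integral\<^sup>N (lborel \<Otimes>\<^sub>M lborel) \<Phi>"
    unfolding torus_Lp_r_def \<Phi>_def h_def A_def by simp
  have T2: "torus_Lp_r 1 (\<lambda>z w. G w z) r = ennreal (1 / (4 * pi\<^sup>2)) * integral\<^sup>N (lborel \<Otimes>\<^sub>M lborel) \<Psi>"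
    unfolding torus_Lp_r_def \<Psi>_def \<Phi>_def h_def A_def
    by (intro arg_cong2[where f="(*)"] refl nn_integral_cong) (auto simp: indicator_def)
  have "integral\<^sup>N (lborel \<Otimes>\<^sub>M lborel) \<Psi> = (\<integral>\<^sup>+ y. (\<integral>\<^sup>+ x. \<Psi> (x, y) \<partial>lborel) \<partial>lborel)"
    by (rule lborel_pair.nn_integral_snd[OF meas2, symmetric])
  also have "\<dots> = (\<integral>\<^sup>+ y. (\<integral>\<^sup>+ x. \<Phi> (y, x) \<partial>lborel) \<partial>lborel)" by (simp add: \<Psi>_def)
  also have "\<dots> = (\<integral>\<^sup>+ y. (\<integral>\<^sup>+ x. \<Phi> (x, y) \<partial>lborel) \<partial>lborel)"
    by (rule lborel_pair.Fubini[OF meas, symmetric])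
  also have "\<dots> = integral\<^sup>N (lborel \<Otimes>\<^sub>M lborel) \<Phi>"
    by (rule lborel_pair.nn_integral_snd[OF meas])
  finally show ?thesis using T1 T2 by simp
qed

lemma hardy_swap:
  assumes "hardy_bidisk 1 G"
  shows "hardy_bidisk 1 (\<lambda>z w. G w z)"
proof -
  have an: "analytic_bidisk G" and fin: "(SUP r\<in>{0<..<1}. torus_Lp_r 1 G r) < \<infinity>"
    using assms by (auto simp: hardy_bidisk_def)
  have c: "continuous_on {p. bidisk_pt (fst p) (snd p)} (\<lambda>p. G (fst p) (snd p))"
    using an by (simp add: analytic_bidisk_def)
  have "(SUP r\<in>{0<..<1}. torus_Lp_r 1 (\<lambda>z w. G w z) r) = (SUP r\<in>{0<..<1}. torus_Lp_r 1 G r)"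
    by (rule SUP_cong[OF refl]) (use torus_swap[OF c] in auto)
  then show ?thesis using analytic_swap[OF an] fin by (simp add: hardy_bidisk_def)
qed

theorem theorem1p5:
  fixes f :: "complex \<Rightarrow> complex \<Rightarrow> complex"
  assumes "rational_on_bidisk f"
    and "analytic_bidisk f"
    and "bounded_bidisk f"
  shows "hardy_bidisk 1 (\<lambda>z w. deriv (\<lambda>u. f u w) z) \<and>
         hardy_bidisk 1 (\<lambda>z w. deriv (\<lambda>v. f z v) w)"
proof
  show "hardy_bidisk 1 (\<lambda>z w. deriv (\<lambda>u. f u w) z)" by (rule hardy_z[OF assms])
  have "hardy_bidisk 1 (\<lambda>z w. deriv (\<lambda>u. f w u) z)"
    using hardy_z[OF rational_swap[OF assms(1)] analytic_swap[OF assms(2)] bounded_swap[OF assms(3)]] .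
  from hardy_swap[OF this] show "hardy_bidisk 1 (\<lambda>z w. deriv (\<lambda>v. f z v) w)" by simp
qed


end
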